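(* Let $A$ be a set, $T=A^*$, $Y$ a semilattice and $\cdot$ a left partial action of $T$ on $Y$ satisfying axioms (A), (B), (C) which is a partially defined action and such that $M(T,Y)$ is an ultra $F$-restriction monoid. For $v\in T$ let $d_v$ be the greatest element of $\mathrm{dom}(\varphi_v)$. Then the poset $X$ (defined in the context) is a meet semilattice, and for $[e,v],[f,u]\in X$, $$[e,v]\wedge[f,u]=[\,v'\cdot(e\wedge d_{v'})\wedge u'\cdot(f\wedge d_{u'}),\,k\,],$$ where $k$ is the longest common prefix of $v$ and $u$, and $v=kv'$, $u=ku'$.
   Context: $A^*$ is the free monoid on $A$. A left partial action of $T$ on $Y$: $1\cdot y=y$ always defined; if $t\cdot y$, $s\cdot(t\cdot y)$ are defined then $(st)\cdot y$ is defined and equals it. With $\varphi_t\colon y\mapsto t\cdot y$: (A) $\mathrm{dom}\varphi_t$, $\mathrm{ran}\varphi_t$ are order ideals of $Y$; (B) $\varphi_t$ is an order-isomorphism between them; (C) $\mathrm{dom}\varphi_t\neq\varnothing$. Partially defined action: $(st)\cdot x$ defined iff $t\cdot x$ and $s\cdot(t\cdot x)$ defined. Reverse: $y\circ t=\varphi_t^{-1}(y)$ for $y\in\mathrm{ran}\varphi_t$. $M(T,Y)=\{(y,t)\colon y\circ t\text{ defined}\}$ with $(x,s)(y,t)=(s\cdot((x\circ s)\wedge y),st)$, $(y,t)^*=(y\circ t,1)$, $(y,t)^+=(y,1)$; it is a proper restriction semigroup. A restriction monoid is ultra $F$-restriction if it is proper, every class of the least congruence $\sigma$ identifying projections has a maximum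 in the natural order ($a\le b\iff a=eb$ for a projection $e$), and its underlying left partial action (of $S/\sigma$ on $P(S)$: $t\cdot e$ defined iff some $a\in t$ has $a^*\ge e$, value $(ae)^+$) is a partially defined action. Construction of $X$: for $(x,s),(y,t)\in Y\times T$ put $(x,s)\to(y,t)$ if there is $p\in T$ with $s=tp$, $p\cdot x$ defined and $p\cdot x=y$. Let $\sim$ be the equivalence generated by $\to$. On $(Y\times T)/\!\sim$ put $C\ge D$ if there are $(x,s)\in C$, $(y,s)\in D$ with $x\ge y$ (a preorder). Identify classes that are mutually $\le$ to get the poset $X$, whose elements are written $[x,s]$, with the induced order. *)

theory Defs
  imports Main "HOL-Library.Sublist"
begin

(* T = A^* is 'a list (product = append, identity = []).
   Y is a meet semilattice, the type 'y :: semilattice_inf.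
   A partial map t . y is modelled as  act t y :: 'y option. *)

definition left_partial_action :: "('a list \<Rightarrow> 'y \<Rightarrow> 'y option) \<Rightarrow> bool" where
  "left_partial_action act \<longleftrightarrow>
     (\<forall>y. act [] y = Some y) \<and>
     (\<forall>s t y z w. act t y = Some z \<longrightarrow> act s z = Some w \<longrightarrow> act (s @ t) y = Some w)"

definition axiom_A :: "('a list \<Rightarrow> 'y::order \<Rightarrow> 'y option) \<Rightarrow> bool" where
  "axiom_A act \<longleftrightarrow>
     (\<forall>t x y. act t x \<noteq> None \<longrightarrow> y \<le> x \<longrightarrow> act t y \<noteq> None) \<and>
     (\<forall>t x z w. act t x = Some z \<longrightarrow> w \<le> z \<longrightarrow> (\<exists>y. act t y = Some w))"

definition axiom_B :: "('a list \<Rightarrow> 'y::order \<Rightarrow> 'y option) \<Rightarrow> bool" where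
  "axiom_B act \<longleftrightarrow>
     (\<forall>t x y x' y'. act t x = Some x' \<longrightarrow> act t y = Some y' \<longrightarrow> (x \<le> y \<longleftrightarrow> x' \<le> y'))"

definition axiom_C :: "('a list \<Rightarrow> 'y \<Rightarrow> 'y option) \<Rightarrow> bool" where
  "axiom_C act \<longleftrightarrow> (\<forall>t. \<exists>y. act t y \<noteq> None)"

definition partially_defined_action :: "('a list \<Rightarrow> 'y \<Rightarrow> 'y option) \<Rightarrow> bool" where
  "partially_defined_action act \<longleftrightarrow>
     (\<forall>s t x. act (s @ t) x \<noteq> None \<longleftrightarrow> (\<exists>z. act t x = Some z \<and> act s z \<noteq> None))"

definition rev_act :: "('a list \<Rightarrow> 'y \<Rightarrow> 'y option) \<Rightarrow> 'y \<Rightarrow> 'a list \<Rightarrow> 'y" where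
  "rev_act act y t = (THE x. act t x = Some y)"

definition Mset :: "('a list \<Rightarrow> 'y \<Rightarrow> 'y option) \<Rightarrow> ('y \<times> 'a list) set" where
  "Mset act = {(y, t). \<exists>x. act t x = Some y}"

definition Mmult :: "('a list \<Rightarrow> 'y::semilattice_inf \<Rightarrow> 'y option) \<Rightarrow>
    'y \<times> 'a list \<Rightarrow> 'y \<times> 'a list \<Rightarrow> 'y \<times> 'a list" where
  "Mmult act p q = (case p of (x, s) \<Rightarrow> case q of (y, t) \<Rightarrow>
      (the (act s (inf (rev_act act x s) y)), s @ t))"

definition Mstar :: "('a list \<Rightarrow> 'y \<Rightarrow> 'y option) \<Rightarrow> 'y \<times> 'a list \<Rightarrow> 'y \<times> 'a list" where
  "Mstar act p = (case p of (y, t) \<Rightarrow> (rev_act act y t, []))"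

definition Mplus :: "'y \<times> 'a list \<Rightarrow> 'y \<times> 'a list" where
  "Mplus p = (case p of (y, t) \<Rightarrow> (y, []))"

definition restriction_monoid ::
  "'m set \<Rightarrow> ('m \<Rightarrow> 'm \<Rightarrow> 'm) \<Rightarrow> ('m \<Rightarrow> 'm) \<Rightarrow> ('m \<Rightarrow> 'm) \<Rightarrow> bool" where
  "restriction_monoid S mult star pl \<longleftrightarrow>
     (\<forall>a\<in>S. \<forall>b\<in>S. mult a b \<in> S) \<and> (\<forall>a\<in>S. star a \<in> S \<and> pl a \<in> S) \<and>
     (\<forall>a\<in>S. \<forall>b\<in>S. \<forall>c\<in>S. mult (mult a b) c = mult a (mult b c)) \<and>
     (\<forall>a\<in>S. \<forall>b\<in>S.
        mult a (star a) = a \<and> mult (star a) (star b) = mult (star b) (star a) \<and>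
        star (mult a (star b)) = mult (star a) (star b) \<and>
        mult (star a) b = mult b (star (mult a b)) \<and>
        mult (pl a) a = a \<and> mult (pl a) (pl b) = mult (pl b) (pl a) \<and>
        pl (mult (pl a) b) = mult (pl a) (pl b) \<and>
        mult a (pl b) = mult (pl (mult a b)) a \<and>
        pl (star a) = star a \<and> star (pl a) = pl a) \<and>
     (\<exists>one\<in>S. \<forall>a\<in>S. mult one a = a \<and> mult a one = a)"

definition projections :: "'m set \<Rightarrow> ('m \<Rightarrow> 'm) \<Rightarrow> 'm set" where
  "projections S star = star ` S"

definition is_congruence ::
  "'m set \<Rightarrow> ('m \<Rightarrow> 'm \<Rightarrow> 'm) \<Rightarrow> ('m \<Rightarrow> 'm) \<Rightarrow> ('m \<Rightarrow> 'm) \<Rightarrow> 'm rel \<Rightarrow> bool" where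
  "is_congruence S mult star pl R \<longleftrightarrow> equiv S R \<and>
     (\<forall>a b c d. (a, b) \<in> R \<longrightarrow> (c, d) \<in> R \<longrightarrow> (mult a c, mult b d) \<in> R) \<and>
     (\<forall>a b. (a, b) \<in> R \<longrightarrow> (star a, star b) \<in> R \<and> (pl a, pl b) \<in> R)"

definition sigma ::
  "'m set \<Rightarrow> ('m \<Rightarrow> 'm \<Rightarrow> 'm) \<Rightarrow> ('m \<Rightarrow> 'm) \<Rightarrow> ('m \<Rightarrow> 'm) \<Rightarrow> 'm rel" where
  "sigma S mult star pl = \<Inter> {R. is_congruence S mult star pl R \<and>
       projections S star \<times> projections S star \<subseteq> R}"

definition nat_le :: "'m set \<Rightarrow> ('m \<Rightarrow> 'm \<Rightarrow> 'm) \<Rightarrow> ('m \<Rightarrow> 'm) \<Rightarrow> 'm \<Rightarrow> 'm \<Rightarrow> bool" where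
  "nat_le S mult star a b \<longleftrightarrow> (\<exists>e\<in>projections S star. a = mult e b)"

definition proper ::
  "'m set \<Rightarrow> ('m \<Rightarrow> 'm \<Rightarrow> 'm) \<Rightarrow> ('m \<Rightarrow> 'm) \<Rightarrow> ('m \<Rightarrow> 'm) \<Rightarrow> bool" where
  "proper S mult star pl \<longleftrightarrow> (\<forall>a\<in>S. \<forall>b\<in>S. (a, b) \<in> sigma S mult star pl \<longrightarrow>
      (star a = star b \<longrightarrow> a = b) \<and> (pl a = pl b \<longrightarrow> a = b))"

(* underlying left partial action of S/sigma on P(S):
   t . e defined iff some a in t has a* >= e; value (a e)^+ *)
definition ua_defined ::
  "('m \<Rightarrow> 'm \<Rightarrow> 'm) \<Rightarrow> ('m \<Rightarrow> 'm) \<Rightarrow> 'm set \<Rightarrow> 'm \<Rightarrow> bool" where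
  "ua_defined mult star t e \<longleftrightarrow> (\<exists>a\<in>t. e = mult e (star a))"

definition ua_value ::
  "('m \<Rightarrow> 'm \<Rightarrow> 'm) \<Rightarrow> ('m \<Rightarrow> 'm) \<Rightarrow> ('m \<Rightarrow> 'm) \<Rightarrow> 'm set \<Rightarrow> 'm \<Rightarrow> 'm" where
  "ua_value mult star pl t e = pl (mult (SOME a. a \<in> t \<and> e = mult e (star a)) e)"

definition ultra_F_restriction ::
  "'m set \<Rightarrow> ('m \<Rightarrow> 'm \<Rightarrow> 'm) \<Rightarrow> ('m \<Rightarrow> 'm) \<Rightarrow> ('m \<Rightarrow> 'm) \<Rightarrow> bool" where
  "ultra_F_restriction S mult star pl \<longleftrightarrow>
     restriction_monoid S mult star pl \<and>
     proper S mult star pl \<and>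
     (\<forall>a\<in>S. \<exists>m\<in>sigma S mult star pl `` {a}.
         \<forall>b\<in>sigma S mult star pl `` {a}. nat_le S mult star b m) \<and>
     (\<forall>a\<in>S. \<forall>b\<in>S. \<forall>e\<in>projections S star.
        ua_defined mult star (sigma S mult star pl `` {mult a b}) e \<longleftrightarrow>
        (ua_defined mult star (sigma S mult star pl `` {b}) e \<and>
         ua_defined mult star (sigma S mult star pl `` {a})
            (ua_value mult star pl (sigma S mult star pl `` {b}) e)))"

definition Xstep :: "('a list \<Rightarrow> 'y \<Rightarrow> 'y option) \<Rightarrow> 'y \<times> 'a list \<Rightarrow> 'y \<times> 'a list \<Rightarrow> bool" where
  "Xstep act P Q \<longleftrightarrow> (case P of (x, s) \<Rightarrow> case Q of (y, t) \<Rightarrow>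
      \<exists>p. s = t @ p \<and> act p x = Some y)"

definition Xsim :: "('a list \<Rightarrow> 'y \<Rightarrow> 'y option) \<Rightarrow> 'y \<times> 'a list \<Rightarrow> 'y \<times> 'a list \<Rightarrow> bool" where
  "Xsim act = (\<lambda>P Q. Xstep act P Q \<or> Xstep act Q P)\<^sup>*\<^sup>*"

(* This is the preorder on classes, read on representatives; the order of X
   is the induced one: [P] \<le> [Q] in X iff Xle act P Q. *)
definition Xle :: "('a list \<Rightarrow> 'y::order \<Rightarrow> 'y option) \<Rightarrow> 'y \<times> 'a list \<Rightarrow> 'y \<times> 'a list \<Rightarrow> bool" where
  "Xle act D C \<longleftrightarrow> (\<exists>x y s. Xsim act C (x, s) \<and> Xsim act D (y, s) \<and> y \<le> x)"

definition dgr :: "('a list \<Rightarrow> 'y::order \<Rightarrow> 'y option) \<Rightarrow> 'a list \<Rightarrow> 'y" where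
  "dgr act v = (GREATEST y. act v y \<noteq> None)"

end

theory Submission
  imports Defs
begin

context
  fixes act :: "'a list \<Rightarrow> 'y::semilattice_inf \<Rightarrow> 'y option"
  assumes lpa: "left_partial_action act"
    and axA: "axiom_A act" and axB: "axiom_B act" and axC: "axiom_C act"
    and pda: "partially_defined_action act"
    and uf: "ultra_F_restriction (Mset act) (Mmult act) (Mstar act) Mplus"
begin

lemma act_nil: "act [] y = Some y"
  using lpa unfolding left_partial_action_def by blast

lemma act_comp: "act t y = Some z \<Longrightarrow> act s z = Some w \<Longrightarrow> act (s @ t) y = Some w"
  using lpa unfolding left_partial_action_def by blast

lemma act_split: "act (s @ t) x = Some w \<Longrightarrow> \<exists>z. act t x = Some z \<and> act s z = Some w"
proof -
  assume h: "act (s @ t) x = Some w"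
  then obtain z where z: "act t x = Some z" "act s z \<noteq> None"
    using pda unfolding partially_defined_action_def by blast
  then obtain w' where w': "act s z = Some w'" by auto
  with z h act_comp[OF z(1) w'] show ?thesis by auto
qed

lemma B: "act t x = Some x' \<Longrightarrow> act t y = Some y' \<Longrightarrow> x \<le> y \<longleftrightarrow> x' \<le> y'"
  using axB unfolding axiom_B_def by blast

lemma A1: "act t x \<noteq> None \<Longrightarrow> y \<le> x \<Longrightarrow> act t y \<noteq> None"
  using axA unfolding axiom_A_def by blast

lemma A2: "act t x = Some z \<Longrightarrow> w \<le> z \<Longrightarrow> \<exists>y. act t y = Some w"
  using axA unfolding axiom_A_def by blast

lemma act_inj: "act t x = Some w \<Longrightarrow> act t y = Some w \<Longrightarrow> x = y"
  using B[of t x w y w] B[of t y w x w] by (auto intro: order.antisym)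

lemma step_refl: "Xstep act P P"
  by (cases P) (auto simp: Xstep_def act_nil intro!: exI[of _ "[]"])

lemma step_trans: "Xstep act P Q \<Longrightarrow> Xstep act Q R \<Longrightarrow> Xstep act P R"
proof -
  assume h1: "Xstep act P Q" and h2: "Xstep act Q R"
  obtain x s where P: "P = (x, s)" by (cases P)
  obtain y t where Q: "Q = (y, t)" by (cases Q)
  obtain w r where R: "R = (w, r)" by (cases R)
  from h1 obtain p where p: "s = t @ p" "act p x = Some y" by (auto simp: Xstep_def P Q)
  from h2 obtain q where q: "t = r @ q" "act q y = Some w" by (auto simp: Xstep_def R Q)
  have "act (q @ p) x = Some w" using act_comp[OF p(2) q(2)] .
  then show ?thesis using p q by (auto simp: Xstep_def P R)
qed

lemma diamond: "Xstep act P Q \<Longrightarrow> Xstep act P R \<Longrightarrow> \<exists>W. Xstep act Q W \<and> Xstep act R W"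
proof -
  assume h1: "Xstep act P Q" and h2: "Xstep act P R"
  obtain x s where P: "P = (x, s)" by (cases P)
  obtain y1 t1 where Q: "Q = (y1, t1)" by (cases Q)
  obtain y2 t2 where R: "R = (y2, t2)" by (cases R)
  from h1 obtain p1 where p1: "s = t1 @ p1" "act p1 x = Some y1" by (auto simp: Xstep_def P Q)
  from h2 obtain p2 where p2: "s = t2 @ p2" "act p2 x = Some y2" by (auto simp: Xstep_def P R)
  have "t1 @ p1 = t2 @ p2" using p1 p2 by simp
  then obtain us where "t1 = t2 @ us \<and> us @ p1 = p2 \<or> t1 @ us = t2 \<and> p1 = us @ p2"
    by (auto simp: append_eq_append_conv2)
  then show ?thesis
  proof
    assume c: "t1 = t2 @ us \<and> us @ p1 = p2"
    then have "act (us @ p1) x = Some y2" using p2 by simp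
    then obtain z where "act p1 x = Some z" "act us z = Some y2" using act_split by blast
    then have "act us y1 = Some y2" using p1 by simp
    then have "Xstep act Q R" using c by (auto simp: Xstep_def Q R)
    then show ?thesis using step_refl by blast
  next
    assume c: "t1 @ us = t2 \<and> p1 = us @ p2"
    then have "act (us @ p2) x = Some y1" using p1 by simp
    then obtain z where "act p2 x = Some z" "act us z = Some y1" using act_split by blast
    then have "act us y2 = Some y1" using p2 by simp
    then have "Xstep act R Q" using c by (auto simp: Xstep_def Q R)
    then show ?thesis using step_refl by blast
  qed
qed

lemma sim_join: "Xsim act P Q \<Longrightarrow> \<exists>R. Xstep act P R \<and> Xstep act Q R"
  unfolding Xsim_def
proof (induction rule: rtranclp_induct)
  case base
  then show ?case using step_refl by blast
next
  case (step Q Q')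
  then obtain R where R: "Xstep act P R" "Xstep act Q R" by blast
  from step(2) show ?case
  proof
    assume "Xstep act Q Q'"
    then obtain W where "Xstep act R W" "Xstep act Q' W" using diamond R(2) by blast
    then show ?thesis using step_trans R(1) by blast
  next
    assume "Xstep act Q' Q"
    then show ?thesis using step_trans R by blast
  qed
qed

lemma join_sim: "Xstep act P R \<Longrightarrow> Xstep act Q R \<Longrightarrow> Xsim act P Q"
proof -
  assume h1: "Xstep act P R" and h2: "Xstep act Q R"
  let ?r = "\<lambda>P Q. Xstep act P Q \<or> Xstep act Q P"
  have "?r\<^sup>*\<^sup>* P R" using h1 by (intro r_into_rtranclp) simp
  moreover have "?r R Q" using h2 by simp
  ultimately show ?thesis unfolding Xsim_def by (rule rtranclp.rtrancl_into_rtrancl)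
qed

lemma rev_nil: "rev_act act y [] = y"
  unfolding rev_act_def by (simp add: act_nil)

lemma dgr_prop: "act v (dgr act v) \<noteq> None \<and> (\<forall>x. act v x \<noteq> None \<longrightarrow> x \<le> dgr act v)"
proof -
  let ?S = "Mset act"
  let ?sig = "sigma ?S (Mmult act) (Mstar act) Mplus"
  have RM: "restriction_monoid ?S (Mmult act) (Mstar act) Mplus"
    using uf unfolding ultra_F_restriction_def by blast
  have clos: "\<And>a b. a \<in> ?S \<Longrightarrow> b \<in> ?S \<Longrightarrow> Mmult act a b \<in> ?S"
    and clos2: "\<And>a. a \<in> ?S \<Longrightarrow> Mstar act a \<in> ?S \<and> Mplus a \<in> ?S"
    using RM unfolding restriction_monoid_def by blast+
  have mult_proj: "\<And>y' y t. Mmult act (y', []) (y, t) = (inf y' y, t)"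
    by (simp add: Mmult_def rev_nil act_nil)
  have snd_mult: "\<And>a b. snd (Mmult act a b) = snd a @ snd b"
    by (auto simp: Mmult_def split: prod.splits)
  have snd_star: "\<And>a. snd (Mstar act a) = []"
    by (auto simp: Mstar_def split: prod.splits)
  have snd_pl: "\<And>a. snd (Mplus a) = []"
    by (auto simp: Mplus_def split: prod.splits)
  define R0 where "R0 = {(a, b). a \<in> ?S \<and> b \<in> ?S \<and> snd a = snd b}"
  have cong: "is_congruence ?S (Mmult act) (Mstar act) Mplus R0"
    unfolding is_congruence_def equiv_def refl_on_def sym_def trans_def R0_def
    using clos clos2 by (auto simp: snd_mult snd_star snd_pl)
  have projsub: "projections ?S (Mstar act) \<times> projections ?S (Mstar act) \<subseteq> R0"
    unfolding projections_def R0_def using clos2 snd_star by auto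
  have sigR0: "?sig \<subseteq> R0"
    unfolding sigma_def using cong projsub by (intro Inter_lower) simp
  have inS: "\<And>y t. (y, t) \<in> ?S \<longleftrightarrow> (\<exists>x. act t x = Some y)"
    by (simp add: Mset_def)
  have proj: "\<And>y. (y, []) \<in> projections ?S (Mstar act)"
  proof -
    fix y
    have "(y, []) \<in> ?S" using inS act_nil by blast
    moreover have "Mstar act (y, []) = (y, [])" by (simp add: Mstar_def rev_nil)
    ultimately show "(y, []) \<in> projections ?S (Mstar act)"
      unfolding projections_def by (metis image_eqI)
  qed
  have same: "\<And>y y' t. (y, t) \<in> ?S \<Longrightarrow> (y', t) \<in> ?S \<Longrightarrow> ((y, t), (y', t)) \<in> ?sig"
  proof -
    fix y y' t
    assume h: "(y, t) \<in> ?S" "(y', t) \<in> ?S"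
    show "((y, t), (y', t)) \<in> ?sig"
      unfolding sigma_def
    proof (rule InterI)
      fix R assume "R \<in> {R. is_congruence ?S (Mmult act) (Mstar act) Mplus R \<and>
         projections ?S (Mstar act) \<times> projections ?S (Mstar act) \<subseteq> R}"
      then have c: "is_congruence ?S (Mmult act) (Mstar act) Mplus R"
        and p: "projections ?S (Mstar act) \<times> projections ?S (Mstar act) \<subseteq> R" by auto
      have eq: "equiv ?S R" using c unfolding is_congruence_def by blast
      have m: "\<And>a b c d. (a, b) \<in> R \<Longrightarrow> (c, d) \<in> R \<Longrightarrow> (Mmult act a c, Mmult act b d) \<in> R"
        using c unfolding is_congruence_def by blast
      have pp: "\<And>w w'. ((w, []), (w', [])) \<in> R" using p proj by blast
      have r1: "((y, t), (y, t)) \<in> R" using eq h unfolding equiv_def refl_on_def by blast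
      have r2: "((y', t), (y', t)) \<in> R" using eq h unfolding equiv_def refl_on_def by blast
      have "((inf y y, t), (inf y' y, t)) \<in> R" using m[OF pp[of y y'] r1] by (simp add: mult_proj)
      then have a1: "((y, t), (inf y y', t)) \<in> R" by (simp add: inf_commute)
      have "((inf y' y', t), (inf y y', t)) \<in> R" using m[OF pp[of y' y] r2] by (simp add: mult_proj)
      then have a2: "((y', t), (inf y y', t)) \<in> R" by simp
      show "((y, t), (y', t)) \<in> R"
        using a1 a2 eq unfolding equiv_def sym_def trans_def by blast
    qed
  qed
  obtain x0 y0 where x0: "act v x0 = Some y0" using axC unfolding axiom_C_def by blast
  have a0: "(y0, v) \<in> ?S" using inS x0 by blast
  then obtain m where m: "m \<in> ?sig `` {(y0, v)}"
    and mx: "\<forall>b\<in>?sig `` {(y0, v)}. nat_le ?S (Mmult act) (Mstar act) b m"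
    using uf unfolding ultra_F_restriction_def by blast
  have "((y0, v), m) \<in> R0" using m sigR0 by blast
  then obtain M where mM: "m = (M, v)" and MS: "(M, v) \<in> ?S" unfolding R0_def by (cases m) auto
  then obtain dM where dM: "act v dM = Some M" using inS by blast
  have bound: "\<And>x w. act v x = Some w \<Longrightarrow> w \<le> M"
  proof -
    fix x w assume xw: "act v x = Some w"
    then have "(w, v) \<in> ?S" using inS by blast
    then have "((y0, v), (w, v)) \<in> ?sig" using same a0 by blast
    then have "nat_le ?S (Mmult act) (Mstar act) (w, v) m" using mx by blast
    then obtain e where e: "e \<in> projections ?S (Mstar act)" "(w, v) = Mmult act e (M, v)"
      unfolding nat_le_def mM by blast
    from e(1) obtain c where "e = Mstar act c" unfolding projections_def by blast
    then obtain z where "e = (z, [])" by (cases c) (simp add: Mstar_def)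
    then have "w = inf z M" using e(2) by (simp add: mult_proj)
    then show "w \<le> M" by simp
  qed
  have great: "\<And>x. act v x \<noteq> None \<Longrightarrow> x \<le> dM"
  proof -
    fix x assume "act v x \<noteq> None"
    then obtain w where w: "act v x = Some w" by auto
    then show "x \<le> dM" using B[OF w dM] bound[OF w] by simp
  qed
  have "dgr act v = dM" unfolding dgr_def
    by (rule Greatest_equality) (use dM great in auto)
  then show ?thesis using dM great by simp
qed

lemma dom_d: "\<exists>a. act v (inf e (dgr act v)) = Some a"
proof -
  have "act v (inf e (dgr act v)) \<noteq> None" using A1 dgr_prop by (meson inf.cobounded2)
  then show ?thesis by auto
qed

lemma lower:
  assumes v: "v = k @ v'"
  shows "Xle act (inf (the (act v' (inf e (dgr act v')))) c, k) (e, v)"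
proof -
  obtain a where a: "act v' (inf e (dgr act v')) = Some a" using dom_d by blast
  have "inf a c \<le> a" by simp
  then obtain y where y: "act v' y = Some (inf a c)" using A2[OF a] by blast
  have "y \<le> inf e (dgr act v')" using B[OF y a] by simp
  then have ye: "y \<le> e" by simp
  have "Xsim act (e, v) (e, v)" unfolding Xsim_def by simp
  moreover have "Xsim act (inf a c, k) (y, v)"
    by (rule join_sim[OF step_refl]) (use y v in \<open>auto simp: Xstep_def\<close>)
  ultimately show ?thesis unfolding Xle_def using a ye by auto
qed

lemma upper:
  assumes v: "v = k @ v'" and u: "u = k @ u'"
    and pre: "\<forall>r. prefix r v \<and> prefix r u \<longrightarrow> prefix r k"
    and z1: "Xle act z (e, v)" and z2: "Xle act z (f, u)"
  shows "Xle act z (inf (the (act v' (inf e (dgr act v')))) (the (act u' (inf f (dgr act u')))), k)"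
proof -
  obtain a where a: "act v' (inf e (dgr act v')) = Some a" using dom_d by blast
  obtain b where b: "act u' (inf f (dgr act u')) = Some b" using dom_d by blast
  from z1 obtain x1 y1 s1 where h1: "Xsim act (e, v) (x1, s1)" "Xsim act z (y1, s1)" "y1 \<le> x1"
    unfolding Xle_def by blast
  from z2 obtain x2 y2 s2 where h2: "Xsim act (f, u) (x2, s2)" "Xsim act z (y2, s2)" "y2 \<le> x2"
    unfolding Xle_def by blast
  obtain P1 where P1: "Xstep act (e, v) P1" "Xstep act (x1, s1) P1" using sim_join[OF h1(1)] by blast
  obtain c1 r1 where P1e: "P1 = (c1, r1)" by (cases P1)
  from P1 obtain q1 q where q1: "v = r1 @ q1" "act q1 e = Some c1"
    and q: "s1 = r1 @ q" "act q x1 = Some c1" by (auto simp: Xstep_def P1e)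
  have "act q y1 \<noteq> None" using A1[of q x1 y1] q h1(3) by auto
  then obtain c1' where c1': "act q y1 = Some c1'" by auto
  have c1le: "c1' \<le> c1" using B[OF c1' q(2)] h1(3) by simp
  have st1: "Xstep act (y1, s1) (c1', r1)" using c1' q by (auto simp: Xstep_def)
  obtain W1 where W1: "Xstep act z W1" "Xstep act (y1, s1) W1" using sim_join[OF h1(2)] by blast
  obtain P2 where P2: "Xstep act (f, u) P2" "Xstep act (x2, s2) P2" using sim_join[OF h2(1)] by blast
  obtain c2 r2 where P2e: "P2 = (c2, r2)" by (cases P2)
  from P2 obtain q2 q' where q2: "u = r2 @ q2" "act q2 f = Some c2"
    and q': "s2 = r2 @ q'" "act q' x2 = Some c2" by (auto simp: Xstep_def P2e)
  have "act q' y2 \<noteq> None" using A1[of q' x2 y2] q' h2(3) by auto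
  then obtain c2' where c2': "act q' y2 = Some c2'" by auto
  have c2le: "c2' \<le> c2" using B[OF c2' q'(2)] h2(3) by simp
  have st2: "Xstep act (y2, s2) (c2', r2)" using c2' q' by (auto simp: Xstep_def)
  obtain W2 where W2: "Xstep act z W2" "Xstep act (y2, s2) W2" using sim_join[OF h2(2)] by blast
  obtain W3 where W3: "Xstep act W1 W3" "Xstep act W2 W3" using diamond[OF W1(1) W2(1)] by blast
  obtain W4 where W4: "Xstep act (c1', r1) W4" "Xstep act W3 W4"
    using diamond[OF st1 step_trans[OF W1(2) W3(1)]] by blast
  obtain W5 where W5: "Xstep act (c2', r2) W5" "Xstep act W4 W5"
    using diamond[OF st2 step_trans[OF step_trans[OF W2(2) W3(2)] W4(2)]] by blast
  have s1W5: "Xstep act (c1', r1) W5" using step_trans[OF W4(1) W5(2)] .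
  have zW5: "Xstep act z W5" using step_trans[OF step_trans[OF step_trans[OF W1(1) W3(1)] W4(2)] W5(2)] .
  obtain d r where W5e: "W5 = (d, r)" by (cases W5)
  from s1W5 obtain p1 where p1: "r1 = r @ p1" "act p1 c1' = Some d" by (auto simp: Xstep_def W5e)
  from W5(1) obtain p2 where p2: "r2 = r @ p2" "act p2 c2' = Some d" by (auto simp: Xstep_def W5e)
  have "v = r @ (p1 @ q1)" using q1 p1 by simp
  then have "prefix r v" unfolding prefix_def by blast
  moreover have "u = r @ (p2 @ q2)" using q2 p2 by simp
  then have "prefix r u" unfolding prefix_def by blast
  ultimately have "prefix r k" using pre by blast
  then obtain g where g: "k = r @ g" by (auto simp: prefix_def)
  obtain x1' where x1': "act q1 x1' = Some c1'" using A2[OF q1(2) c1le] by blast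
  have x1e: "x1' \<le> e" using B[OF x1' q1(2)] c1le by simp
  have "act (p1 @ q1) x1' = Some d" using act_comp[OF x1' p1(2)] .
  moreover have "p1 @ q1 = g @ v'" using v q1 p1 g by simp
  ultimately have "act (g @ v') x1' = Some d" by simp
  then obtain w1 where w1: "act v' x1' = Some w1" "act g w1 = Some d" using act_split by blast
  have "x1' \<le> dgr act v'" using dgr_prop w1 by blast
  then have "x1' \<le> inf e (dgr act v')" using x1e by simp
  then have w1a: "w1 \<le> a" using B[OF w1(1) a] by simp
  obtain x2' where x2': "act q2 x2' = Some c2'" using A2[OF q2(2) c2le] by blast
  have x2f: "x2' \<le> f" using B[OF x2' q2(2)] c2le by simp
  have "act (p2 @ q2) x2' = Some d" using act_comp[OF x2' p2(2)] .
  moreover have "p2 @ q2 = g @ u'" using u q2 p2 g by simp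
  ultimately have "act (g @ u') x2' = Some d" by simp
  then obtain w2 where w2: "act u' x2' = Some w2" "act g w2 = Some d" using act_split by blast
  have "x2' \<le> dgr act u'" using dgr_prop w2 by blast
  then have "x2' \<le> inf f (dgr act u')" using x2f by simp
  then have w2b: "w2 \<le> b" using B[OF w2(1) b] by simp
  have "w1 = w2" using act_inj[OF w1(2) w2(2)] .
  then have wle: "w1 \<le> inf a b" using w1a w2b by simp
  have "Xsim act (inf a b, k) (inf a b, k)" unfolding Xsim_def by simp
  moreover have "Xsim act z (w1, k)"
    by (rule join_sim[OF zW5]) (use w1 g in \<open>auto simp: Xstep_def W5e\<close>)
  ultimately have "Xle act z (inf a b, k)" unfolding Xle_def using wle by blast
  then show ?thesis using a b by simp
qed

end

theorem lemma5p4: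
  fixes act :: "'a list \<Rightarrow> 'y::semilattice_inf \<Rightarrow> 'y option"
  assumes "left_partial_action act"
    and "axiom_A act" and "axiom_B act" and "axiom_C act"
    and "partially_defined_action act"
    and "ultra_F_restriction (Mset act) (Mmult act) (Mstar act) Mplus"
  shows "\<forall>e v f u.
     (let k = longest_common_prefix v u;
          v' = drop (length k) v;
          u' = drop (length k) u;
          m = (inf (the (act v' (inf e (dgr act v')))) (the (act u' (inf f (dgr act u')))), k)
      in Xle act m (e, v) \<and> Xle act m (f, u) \<and>
         (\<forall>z. Xle act z (e, v) \<and> Xle act z (f, u) \<longrightarrow> Xle act z m))"
proof (intro allI)
  fix e f :: 'y and v u :: "'a list"
  define k where "k = longest_common_prefix v u"
  have v: "v = k @ drop (length k) v" using longest_common_prefix_prefix1[of v u]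
    unfolding k_def by (metis append_eq_conv_conj prefix_def)
  have u: "u = k @ drop (length k) u" using longest_common_prefix_prefix2[of v u]
    unfolding k_def by (metis append_eq_conv_conj prefix_def)
  have pre: "\<forall>r. prefix r v \<and> prefix r u \<longrightarrow> prefix r k"
    unfolding k_def using longest_common_prefix_max_prefix by blast
  note L = lower[OF assms v] lower[OF assms u]
  note U = upper[OF assms v u pre]
  show "let k = longest_common_prefix v u;
          v' = drop (length k) v;
          u' = drop (length k) u;
          m = (inf (the (act v' (inf e (dgr act v')))) (the (act u' (inf f (dgr act u')))), k)
      in Xle act m (e, v) \<and> Xle act m (f, u) \<and>
         (\<forall>z. Xle act z (e, v) \<and> Xle act z (f, u) \<longrightarrow> Xle act z m)"
    unfolding Let_def k_def[symmetric]
    using L(1) L(2)[of f "the (act (drop (length k) v) (inf e (dgr act (drop (length k) v))))"] U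
    by (simp add: inf_commute)
qed

end
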